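(* Let $x,y:\mathbb{Z}\to\mathbb{R}$ be the coordinates of the vertices of a polygon indexed by $u\in\mathbb{Z}$, and let $X+ih_1$ and $Y+ih_2$ be their discrete analytic extensions (as in the context). Write $h=(h_1,h_2)$. Then there exists $F:\mathbb{Z}^2\to\mathbb{R}$ such that for all $(u,v)\in\mathbb{Z}^2$ $$F(u+1,v)-F(u,v)=-\big[h(u+\tfrac12,v-\tfrac12),\,h(u+\tfrac12,v+\tfrac12)\big],$$ $$F(u,v+1)-F(u,v)=\big[h(u-\tfrac12,v+\tfrac12),\,h(u+\tfrac12,v+\tfrac12)\big].$$
   Context: $[X,Y]$ is the determinant of the $2\times2$ matrix with columns $X,Y$. Let $(\mathbb{Z}^2)^*=(\mathbb{Z}+\tfrac12)^2$ be the dual lattice. Functions $g:\mathbb{Z}^2\to\mathbb{R}$ and $k:(\mathbb{Z}^2)^*\to\mathbb{R}$ are complex conjugate (and $g+ik$ is called discrete analytic) if for all $(u,v)\in\mathbb{Z}^2$: $g(u+1,v)-g(u,v)=k(u+\tfrac12,v+\tfrac12)-k(u+\tfrac12,v-\tfrac12)$ and $g(u,v+1)-g(u,v)=-(k(u+\tfrac12,v+\tfrac12)-k(u-\tfrac12,v+\tfrac12))$ (discrete Cauchy–Riemann equations). The discrete analytic extension of $x$ is the unique discrete analytic $X+ih_1$ with $X(u,0)=x(u)$ and $h_1(u+\tfrac12,\tfrac12)=-h_1(u+\tfrac12,-\tfrac12)$ for all $u$; similarly $Y+ih_2$ extends $y$. *)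

theory Defs
  imports Main "HOL.Real"
begin

(* Convention: a function k on the dual lattice (Z+1/2)^2 is represented as
   kd :: int => int => real with  kd a b = k(a + 1/2, b + 1/2). *)

definition det2 :: "real \<times> real \<Rightarrow> real \<times> real \<Rightarrow> real" where
  "det2 P Q = fst P * snd Q - fst Q * snd P"

definition complex_conjugate :: "(int \<Rightarrow> int \<Rightarrow> real) \<Rightarrow> (int \<Rightarrow> int \<Rightarrow> real) \<Rightarrow> bool" where
  "complex_conjugate g k \<longleftrightarrow>
     (\<forall>u v. g (u + 1) v - g u v = k u v - k u (v - 1)
          \<and> g u (v + 1) - g u v = - (k u v - k (u - 1) v))"

definition discrete_analytic_extension ::
  "(int \<Rightarrow> real) \<Rightarrow> (int \<Rightarrow> int \<Rightarrow> real) \<Rightarrow> (int \<Rightarrow> int \<Rightarrow> real) \<Rightarrow> bool" where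
  "discrete_analytic_extension x G H \<longleftrightarrow>
     complex_conjugate G H \<and> (\<forall>u. G u 0 = x u) \<and> (\<forall>u. H u 0 = - H u (-1))"

end

theory Submission
  imports Defs
begin

lemma harm:
  assumes "complex_conjugate g k"
  shows "k u (v+1) = 4 * k u v - k (u-1) v - k (u+1) v - k u (v-1)"
proof -
  have a: "g (u+1) v - g u v = k u v - k u (v-1)" using assms unfolding complex_conjugate_def by blast
  have b: "g (u+1) (v+1) - g (u+1) v = - (k (u+1) v - k u v)"
    using assms unfolding complex_conjugate_def by (metis add_diff_cancel_right')
  have c: "g u (v+1) - g u v = - (k u v - k (u-1) v)" using assms unfolding complex_conjugate_def by blast
  have d: "g (u+1) (v+1) - g u (v+1) = k u (v+1) - k u v"
    using assms unfolding complex_conjugate_def by (metis add_diff_cancel_right')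
  from a b c d show ?thesis by linarith
qed

lemma antider:
  fixes d :: "int \<Rightarrow> real"
  shows "\<exists>S. S 0 = 0 \<and> (\<forall>n. S (n+1) - S n = d n)"
proof -
  define S where "S n = (if n \<ge> 0 then sum d {0..<n} else - sum d {n..<0})" for n
  have "S (n+1) - S n = d n" for n
  proof (cases "n \<ge> 0")
    case True
    then have "{0..<n+1} = insert n {0..<n}" by auto
    then show ?thesis using True by (simp add: S_def)
  next
    case False
    show ?thesis
    proof (cases "n = -1")
      case True
      have "{-1..<0::int} = {-1}" by auto
      then show ?thesis using True by (simp add: S_def)
    next
      case F2: False
      have "{n..<0} = insert n {n+1..<0}" using False by auto
      then show ?thesis using False F2 by (simp add: S_def)
    qed
  qed
  moreover have "S 0 = 0" by (simp add: S_def)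
  ultimately show ?thesis by blast
qed

theorem mainTheorem10:
  fixes x y :: "int \<Rightarrow> real" and X Y h1 h2 :: "int \<Rightarrow> int \<Rightarrow> real"
  assumes "discrete_analytic_extension x X h1"
      and "discrete_analytic_extension y Y h2"
  shows "\<exists>F :: int \<Rightarrow> int \<Rightarrow> real. \<forall>u v.
           F (u + 1) v - F u v = - det2 (h1 u (v - 1), h2 u (v - 1)) (h1 u v, h2 u v)
         \<and> F u (v + 1) - F u v = det2 (h1 (u - 1) v, h2 (u - 1) v) (h1 u v, h2 u v)"
proof -
  define A where "A u v = - det2 (h1 u (v - 1), h2 u (v - 1)) (h1 u v, h2 u v)" for u v
  define B where "B u v = det2 (h1 (u - 1) v, h2 (u - 1) v) (h1 u v, h2 u v)" for u v
  have c1: "complex_conjugate X h1" and c2: "complex_conjugate Y h2"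
    using assms unfolding discrete_analytic_extension_def by auto
  have closed: "A u v + B (u+1) v = B u v + A u (v+1)" for u v
  proof -
    have e1: "h1 u (v+1) = 4 * h1 u v - h1 (u-1) v - h1 (u+1) v - h1 u (v-1)" by (rule harm[OF c1])
    have e2: "h2 u (v+1) = 4 * h2 u v - h2 (u-1) v - h2 (u+1) v - h2 u (v-1)" by (rule harm[OF c2])
    show ?thesis unfolding A_def B_def det2_def
      by (simp only: add_diff_cancel_right' fst_conv snd_conv e1 e2) (simp add: algebra_simps)
  qed
  obtain S where S: "\<forall>n. S (n+1) - S n = A n 0" using antider[of "\<lambda>n. A n 0"] by blast
  have "\<forall>u. \<exists>T. T 0 = 0 \<and> (\<forall>n. T (n+1) - T n = B u n)" using antider by blast
  then obtain T where T0: "\<And>u. T u 0 = 0" and T: "\<And>u n. T u (n+1) - T u n = B u n" by metis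
  have key: "T (u+1) v - T u v = A u v - A u 0" for u v
  proof (induction v rule: int_induct[where k=0])
    case base then show ?case using T0 by simp
  next
    case (step1 i)
    then show ?case using T[of "u+1" i] T[of u i] closed[of u i] by linarith
  next
    case (step2 i)
    then show ?case using T[of "u+1" "i-1"] T[of u "i-1"] closed[of u "i-1"] by simp
  qed
  define F where "F u v = S u + T u v" for u v
  have "F (u + 1) v - F u v = A u v \<and> F u (v + 1) - F u v = B u v" for u v
    using S[rule_format, of u] key[of u v] T[of u v] unfolding F_def by linarith
  then show ?thesis unfolding A_def B_def by blast
qed

end
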